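(* Let $X$ be a real Banach space, $\varphi$ a strictly convex increasing function on $[0,\infty)$ with $\varphi(0)=0$, and $r$ a symmetric real random variable with $\|r\|_\infty=1$. Then: (1) A point $x\in S_X$ is an extreme point of $B_X$ if and only if [$y\in X$ and $\mathbb{E}[\varphi(\|x+ry\|)]=\varphi(1)$] implies $y=0$. (2) A point $x\in S_X$ is a strongly extreme point of $B_X$ if and only if for every $\epsilon>0$ there is $\delta>0$ such that $\mathbb{E}[\varphi(\|x+ry\|)]\ge\varphi(1)+\delta$ whenever $\|y\|\ge\epsilon$. (3) $X$ is uniformly convex if and only if $\delta_\varphi(\epsilon)>0$ for every $\epsilon>0$, where $\delta_\varphi(\epsilon)=\inf\{\mathbb{E}[\varphi(\|x+ry\|)]-\varphi(1): x\in S_X,\ \|y\|\ge\epsilon\}$.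
   Context: $S_X$ and $B_X$ are the unit sphere and closed unit ball of $X$. A point $x\in S_X$ is an extreme point of $B_X$ if $\max\{\|x+y\|,\|x-y\|\}=1$ implies $y=0$. It is a strongly extreme point of $B_X$ if for every $\epsilon>0$ there is $\delta>0$ with $\inf\{\max\{\|x+y\|,\|x-y\|\}:\|y\|\ge\epsilon\}\ge1+\delta$. $X$ is uniformly convex if for every $\epsilon>0$ there is $\delta>0$ with $\inf\{\max\{\|x+y\|,\|x-y\|\}:\|y\|\ge\epsilon,\|x\|=1\}\ge1+\delta$. $\varphi$ strictly convex means $\varphi(\frac{s+t}{2})<\frac{\varphi(s)+\varphi(t)}{2}$ for distinct $s,t$. A random variable is symmetric if $r$ and $-r$ have the same distribution. *)

theory Defs
  imports "HOL-Probability.Probability"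
begin

definition strictly_convex_nonneg :: "(real \<Rightarrow> real) \<Rightarrow> bool" where
  "strictly_convex_nonneg \<phi> \<longleftrightarrow>
     (\<forall>s\<ge>0. \<forall>t\<ge>0. s \<noteq> t \<longrightarrow> \<phi> ((s + t) / 2) < (\<phi> s + \<phi> t) / 2)"

definition extreme_point_ball :: "'a::real_normed_vector \<Rightarrow> bool" where
  "extreme_point_ball x \<longleftrightarrow> norm x = 1 \<and>
     (\<forall>y. max (norm (x + y)) (norm (x - y)) = 1 \<longrightarrow> y = 0)"

definition strongly_extreme_point_ball :: "'a::real_normed_vector \<Rightarrow> bool" where
  "strongly_extreme_point_ball x \<longleftrightarrow> norm x = 1 \<and>
     (\<forall>\<epsilon>>0. \<exists>\<delta>>0. \<forall>y. norm y \<ge> \<epsilon> \<longrightarrow> max (norm (x + y)) (norm (x - y)) \<ge> 1 + \<delta>)"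

definition uniformly_convex :: "'a::real_normed_vector itself \<Rightarrow> bool" where
  "uniformly_convex _ \<longleftrightarrow>
     (\<forall>\<epsilon>>0. \<exists>\<delta>>0. \<forall>x y::'a. norm x = 1 \<and> norm y \<ge> \<epsilon> \<longrightarrow>
         max (norm (x + y)) (norm (x - y)) \<ge> 1 + \<delta>)"

definition exp_phi :: "'b measure \<Rightarrow> ('b \<Rightarrow> real) \<Rightarrow> (real \<Rightarrow> real) \<Rightarrow> 'a::real_normed_vector \<Rightarrow> 'a \<Rightarrow> real" where
  "exp_phi M r \<phi> x y = (\<integral>\<omega>. \<phi> (norm (x + r \<omega> *\<^sub>R y)) \<partial>M)"

text \<open>The modulus \<open>\<delta>_\<phi>(\<epsilon>)\<close>, taken in the extended reals (infimum of the empty set is \<infinity>).\<close>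
definition delta_phi :: "'b measure \<Rightarrow> ('b \<Rightarrow> real) \<Rightarrow> (real \<Rightarrow> real) \<Rightarrow> 'a::real_normed_vector itself \<Rightarrow> real \<Rightarrow> ereal" where
  "delta_phi M r \<phi> _ \<epsilon> =
     (INF p \<in> {(x::'a, y). norm x = 1 \<and> norm y \<ge> \<epsilon>}. ereal (exp_phi M r \<phi> (fst p) (snd p) - \<phi> 1))"

end

theory Submission
  imports Defs
begin


locale phi_setup =
  fixes \<phi> :: "real \<Rightarrow> real"
  assumes sc: "strictly_convex_nonneg \<phi>" and mo: "mono_on {0..} \<phi>"
begin

lemma mono_le: "0 \<le> s \<Longrightarrow> s \<le> t \<Longrightarrow> \<phi> s \<le> \<phi> t"
  using mo by (auto simp: mono_on_def)

lemma mid_le: assumes "0 \<le> s" "0 \<le> t" shows "\<phi> ((s+t)/2) \<le> (\<phi> s + \<phi> t)/2"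
proof (cases "s = t")
  case True then show ?thesis by simp
next
  case False then show ?thesis using sc assms unfolding strictly_convex_nonneg_def by force
qed

lemma mid_less: assumes "0 \<le> s" "0 \<le> t" "s \<noteq> t" shows "\<phi> ((s+t)/2) < (\<phi> s + \<phi> t)/2"
  using sc assms unfolding strictly_convex_nonneg_def by force

lemma strict_mono: assumes "0 \<le> s" "s < t" shows "\<phi> s < \<phi> t"
proof -
  have "\<phi> s \<le> \<phi> ((s+t)/2)" "\<phi> ((s+t)/2) \<le> \<phi> t"
    using assms by (auto intro!: mono_le)
  moreover have "\<phi> ((s+t)/2) < (\<phi> s + \<phi> t)/2" using assms by (intro mid_less) auto
  ultimately have "\<phi> s < (\<phi> s + \<phi> t)/2" by linarith
  then show ?thesis by (simp add: field_simps)
qed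

lemma dyadic: "0 \<le> x \<Longrightarrow> 0 \<le> y \<Longrightarrow> k \<le> 2^n \<Longrightarrow>
  \<phi> (x + (real k / 2^n) * (y - x)) \<le> \<phi> x + (real k / 2^n) * (\<phi> y - \<phi> x)"
proof (induction n arbitrary: k)
  case 0
  then have "k = 0 \<or> k = 1" by auto
  then show ?case by auto
next
  case (Suc n)
  show ?case
  proof (cases "even k")
    case True
    then obtain j where j: "k = 2*j" by blast
    with Suc.prems have "j \<le> 2^n" by auto
    from Suc.IH[OF Suc.prems(1,2) this] show ?thesis
      by (simp add: j)
  next
    case False
    then obtain j where j: "k = 2*j+1" using oddE by blast
    with Suc.prems have jl: "j + 1 \<le> 2^n" by auto
    define P where "P i = x + (real i / 2^n) * (y - x)" for i :: nat
    have P0: "0 \<le> P i" if "i \<le> 2^n" for i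
    proof -
      have a: "0 \<le> real i / 2^n" "real i / 2^n \<le> 1" using that by (auto simp: field_simps)
      have "P i = (1 - real i / 2^n) * x + (real i / 2^n) * y" by (simp add: P_def algebra_simps diff_divide_distrib)
      also have "\<dots> \<ge> 0" using a Suc.prems by auto
      finally show ?thesis .
    qed
    have eq: "x + (real k / 2^Suc n) * (y - x) = (P j + P (j+1))/2"
      by (simp add: P_def j field_simps)
    have "\<phi> ((P j + P (j+1))/2) \<le> (\<phi> (P j) + \<phi> (P (j+1)))/2"
      using P0 jl by (intro mid_le) auto
    also have "\<dots> \<le> ((\<phi> x + (real j / 2^n) * (\<phi> y - \<phi> x)) + (\<phi> x + (real (j+1) / 2^n) * (\<phi> y - \<phi> x)))/2"
    proof -
      have h1: "\<phi> (P j) \<le> \<phi> x + (real j / 2^n) * (\<phi> y - \<phi> x)"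
        unfolding P_def using jl by (intro Suc.IH[OF Suc.prems(1,2)]) auto
      have h2: "\<phi> (P (j+1)) \<le> \<phi> x + (real (j+1) / 2^n) * (\<phi> y - \<phi> x)"
        unfolding P_def using jl by (intro Suc.IH[OF Suc.prems(1,2)]) auto
      show ?thesis by (intro divide_right_mono add_mono h1 h2) simp
    qed
    also have "\<dots> = \<phi> x + (real k / 2^Suc n) * (\<phi> y - \<phi> x)"
      by (simp add: j field_simps)
    finally show ?thesis unfolding eq .
  qed
qed

lemma convex_ord: assumes "0 \<le> x" "x \<le> y" "0 \<le> l" "l \<le> 1"
  shows "\<phi> (x + l * (y - x)) \<le> \<phi> x + l * (\<phi> y - \<phi> x)"
proof (rule field_le_epsilon)
  fix e :: real assume e: "0 < e"
  have C: "\<phi> y - \<phi> x \<ge> 0" using assms mono_le by auto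
  obtain n where n: "(1/2::real)^n < e / (\<phi> y - \<phi> x + 1)"
    using real_arch_pow_inv[of "e / (\<phi> y - \<phi> x + 1)" "1/2"] e C by auto
  define k where "k = nat \<lceil>l * 2^n\<rceil>"
  have kr: "real k = \<lceil>l * 2^n\<rceil>" using assms unfolding k_def by simp
  have k1: "l * 2^n \<le> real k" "real k < l * 2^n + 1" using kr by linarith+
  have "real k \<le> 2^n"
  proof -
    have "l * 2^n \<le> 2^n" using assms by simp
    then have "\<lceil>l * 2^n\<rceil> \<le> \<lceil>(2::real)^n\<rceil>" by (rule ceiling_mono)
    then show ?thesis using kr by simp
  qed
  then have kle: "k \<le> 2^n" by (metis of_nat_le_iff of_nat_numeral of_nat_power)
  have mu1: "l \<le> real k / 2^n" using k1 by (simp add: field_simps)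
  have mu2: "real k / 2^n \<le> l + (1/2)^n" using k1 by (simp add: field_simps)
  have "\<phi> (x + l * (y - x)) \<le> \<phi> (x + (real k / 2^n) * (y - x))"
  proof -
    have "l*(y-x) \<le> (real k/2^n)*(y-x)" using assms mu1 by (intro mult_right_mono) auto
    then show ?thesis using assms by (intro mono_le) auto
  qed
  also have "\<dots> \<le> \<phi> x + (real k / 2^n) * (\<phi> y - \<phi> x)"
    using dyadic[OF assms(1) _ kle] assms by auto
  also have "\<dots> \<le> \<phi> x + (l + (1/2)^n) * (\<phi> y - \<phi> x)"
    using mu2 C by (intro add_left_mono mult_right_mono) auto
  also have "\<dots> \<le> \<phi> x + l * (\<phi> y - \<phi> x) + e"
  proof -
    have "(1/2)^n * (\<phi> y - \<phi> x) \<le> (1/2)^n * (\<phi> y - \<phi> x + 1)" by simp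
    also have "\<dots> \<le> e" using n C by (simp add: field_simps)
    finally show ?thesis by (simp add: algebra_simps)
  qed
  finally show "\<phi> (x + l * (y - x)) \<le> \<phi> x + l * (\<phi> y - \<phi> x) + e" .
qed

definition F :: "real \<Rightarrow> real" where "F s = (\<phi> (1+s) + \<phi> (1-s))/2 - \<phi> 1"

lemma F_nonneg: "0 \<le> s \<Longrightarrow> s \<le> 1 \<Longrightarrow> 0 \<le> F s"
  using mid_le[of "1+s" "1-s"] by (simp add: F_def)

lemma F_pos: "0 < s \<Longrightarrow> s \<le> 1 \<Longrightarrow> 0 < F s"
  using mid_less[of "1+s" "1-s"] by (simp add: F_def)

lemma F_mono: assumes "0 < t" "t \<le> s" "s \<le> 1" shows "F t \<le> F s"
proof -
  define l where "l = t / s"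
  have l: "0 \<le> l" "l \<le> 1" using assms by (auto simp: l_def)
  have "\<phi> (1 + l * ((1+s) - 1)) \<le> \<phi> 1 + l * (\<phi> (1+s) - \<phi> 1)"
    using assms l by (intro convex_ord) auto
  moreover have "\<phi> ((1-s) + (1-l) * (1 - (1-s))) \<le> \<phi> (1-s) + (1-l) * (\<phi> 1 - \<phi> (1-s))"
    using assms l by (intro convex_ord) auto
  moreover have "l * s = t" using assms by (simp add: l_def)
  ultimately have "\<phi> (1+t) \<le> \<phi> 1 + l * (\<phi> (1+s) - \<phi> 1)"
    "\<phi> (1-t) \<le> \<phi> (1-s) + (1-l) * (\<phi> 1 - \<phi> (1-s))"
    by (simp_all add: algebra_simps)
  then have "F t \<le> l * F s" unfolding F_def by (simp add: field_simps)
  also have "\<dots> \<le> F s" using l F_nonneg[of s] assms by (simp add: mult_left_le_one_le)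
  finally show ?thesis .
qed

lemma key0: assumes "0 \<le> a" "0 \<le> b" "2 \<le> a + b" shows "\<phi> 1 \<le> (\<phi> a + \<phi> b)/2"
proof -
  have "\<phi> 1 \<le> \<phi> ((a+b)/2)" using assms by (intro mono_le) auto
  also have "\<dots> \<le> (\<phi> a + \<phi> b)/2" using assms by (intro mid_le)
  finally show ?thesis .
qed

lemma key_aux: assumes "0 \<le> a" "0 \<le> b" "2 \<le> a + b" "0 < d" "d \<le> 1" "1 + d \<le> a"
  shows "\<phi> 1 + F d \<le> (\<phi> a + \<phi> b)/2"
proof (cases "1 - d \<le> b")
  case True
  have "\<phi> (1+d) \<le> \<phi> a" "\<phi> (1-d) \<le> \<phi> b" using assms True by (auto intro!: mono_le)
  then show ?thesis by (simp add: F_def)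
next
  case False
  define s where "s = 1 - b"
  have s: "d < s" "s \<le> 1" using False assms by (auto simp: s_def)
  have "\<phi> (1+s) \<le> \<phi> a" using assms s by (intro mono_le) (auto simp: s_def)
  moreover have "b = 1 - s" by (simp add: s_def)
  moreover have "F d \<le> F s" using s assms by (intro F_mono) auto
  ultimately show ?thesis by (simp add: F_def)
qed

lemma key: assumes "0 \<le> a" "0 \<le> b" "2 \<le> a + b" "0 < d" "d \<le> 1" "1 + d \<le> max a b"
  shows "\<phi> 1 + F d \<le> (\<phi> a + \<phi> b)/2"
proof (cases "a \<le> b")
  case True
  then show ?thesis using key_aux[of b a d] assms by (simp add: max_def add.commute)
next
  case False
  then show ?thesis using key_aux[of a b d] assms by (simp add: max_def)
qed

lemma right_cont: assumes "0 < e" shows "\<exists>\<eta>>0. \<phi> (1 + \<eta>) < \<phi> 1 + e"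
proof -
  define C where "C = \<phi> 2 - \<phi> 1"
  have C: "0 < C" using strict_mono[of 1 2] by (simp add: C_def)
  define \<eta> where "\<eta> = min 1 (e / (2*C))"
  have \<eta>: "0 < \<eta>" "\<eta> \<le> 1" "\<eta> * C < e" using C assms
    by (auto simp: \<eta>_def min_def field_simps)
  have "\<phi> (1 + \<eta> * (2 - 1)) \<le> \<phi> 1 + \<eta> * (\<phi> 2 - \<phi> 1)" using \<eta> by (intro convex_ord) auto
  then show ?thesis using \<eta> by (intro exI[of _ \<eta>]) (simp add: C_def)
qed

end


lemma cc_norm:
  fixes x y :: "'a::real_normed_vector"
  assumes "\<bar>t\<bar> \<le> 1"
  shows "norm (x + t *\<^sub>R y) \<le> max (norm (x + y)) (norm (x - y))"
proof -
  have eq: "x + t *\<^sub>R y = ((1+t)/2) *\<^sub>R (x + y) + ((1-t)/2) *\<^sub>R (x - y)"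
  proof -
    have "((1+t)/2) *\<^sub>R (x + y) + ((1-t)/2) *\<^sub>R (x - y)
       = (((1+t)/2) + ((1-t)/2)) *\<^sub>R x + (((1+t)/2) - ((1-t)/2)) *\<^sub>R y"
      by (simp add: scaleR_add_right scaleR_diff_right scaleR_add_left scaleR_diff_left)
    also have "\<dots> = x + t *\<^sub>R y" by (simp add: field_simps)
    finally show ?thesis by simp
  qed
  have "norm (x + t *\<^sub>R y) \<le> ((1+t)/2) * norm (x + y) + ((1-t)/2) * norm (x - y)"
  proof -
    have p: "0 \<le> (1+t)/2" "0 \<le> (1-t)/2" using assms by auto
    have "norm (x + t *\<^sub>R y) \<le> norm (((1+t)/2) *\<^sub>R (x + y)) + norm (((1-t)/2) *\<^sub>R (x - y))"
      unfolding eq by (rule norm_triangle_ineq)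
    also have "\<dots> = ((1+t)/2) * norm (x + y) + ((1-t)/2) * norm (x - y)"
      using p by (simp only: norm_scaleR abs_of_nonneg)
    finally show ?thesis .
  qed
  also have "\<dots> \<le> ((1+t)/2) * max (norm (x + y)) (norm (x - y)) + ((1-t)/2) * max (norm (x + y)) (norm (x - y))"
    using assms by (intro add_mono mult_left_mono) auto
  also have "\<dots> = max (norm (x + y)) (norm (x - y))" by (simp add: field_simps)
  finally show ?thesis .
qed

lemma two_le_sum:
  fixes x y :: "'a::real_normed_vector"
  assumes "norm x = 1"
  shows "2 \<le> norm (x + y) + norm (x - y)"
proof -
  have "norm ((x + y) + (x - y)) \<le> norm (x + y) + norm (x - y)" by (rule norm_triangle_ineq)
  moreover have "(x + y) + (x - y) = 2 *\<^sub>R x" by (simp add: scaleR_2)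
  ultimately show ?thesis using assms by simp
qed

locale thm_setup = phi_setup \<phi> + prob_space M
  for \<phi> :: "real \<Rightarrow> real" and M :: "'b measure" +
  fixes r :: "'b \<Rightarrow> real"
  assumes r_meas[measurable]: "r \<in> borel_measurable M"
    and symm: "distr M borel r = distr M borel (\<lambda>\<omega>. - r \<omega>)"
    and ess: "esssup M (\<lambda>\<omega>. ereal \<bar>r \<omega>\<bar>) = 1"
    and phi0: "\<phi> 0 = 0"
begin

definition G :: "'a::real_normed_vector \<Rightarrow> 'a \<Rightarrow> real \<Rightarrow> real" where
  "G x y t = \<phi> (norm (x + t *\<^sub>R y))"

lemma G_borel: "G x y \<in> borel_measurable borel"
proof -
  define \<psi> where "\<psi> s = \<phi> (max s 0)" for s
  have "mono \<psi>" unfolding \<psi>_def mono_def by (auto intro!: mono_le)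
  then have p: "\<psi> \<in> borel_measurable borel" by (rule borel_measurable_mono)
  have c: "(\<lambda>t. norm (x + t *\<^sub>R y)) \<in> borel_measurable borel"
    by (intro borel_measurable_continuous_onI continuous_intros)
  have "G x y = (\<lambda>t. \<psi> (norm (x + t *\<^sub>R y)))"
    by (simp add: G_def \<psi>_def fun_eq_iff)
  then show ?thesis using measurable_compose[OF c p] by simp
qed

lemma Gr_meas: "(\<lambda>\<omega>. G x y (r \<omega>)) \<in> borel_measurable M"
  by (rule measurable_compose[OF r_meas G_borel])

lemma AE_r: "AE \<omega> in M. \<bar>r \<omega>\<bar> \<le> 1"
  using esssup_AE[of "\<lambda>\<omega>. ereal \<bar>r \<omega>\<bar>" M] ess by simp

lemma pos_set: "0 < measure M {\<omega> \<in> space M. 1/2 < \<bar>r \<omega>\<bar>}"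
proof -
  have "emeasure M {\<omega> \<in> space M. ereal (1/2) < ereal \<bar>r \<omega>\<bar>} > 0"
  proof (rule esssup_pos_measure)
    show "(\<lambda>\<omega>. ereal \<bar>r \<omega>\<bar>) \<in> borel_measurable M" by measurable
    show "ereal (1/2) < esssup M (\<lambda>\<omega>. ereal \<bar>r \<omega>\<bar>)" by (simp add: ess)
  qed
  then show ?thesis by (simp add: emeasure_eq_measure)
qed

lemma G_nonneg: "0 \<le> G x y t"
  unfolding G_def using mono_le[of 0 "norm (x + t *\<^sub>R y)"] phi0 by simp

lemma G_bound: "\<bar>t\<bar> \<le> 1 \<Longrightarrow> G x y t \<le> \<phi> (norm x + norm y)"
  unfolding G_def
proof (rule mono_le)
  assume "\<bar>t\<bar> \<le> 1"
  have "norm (x + t *\<^sub>R y) \<le> norm x + \<bar>t\<bar> * norm y" using norm_triangle_ineq[of x "t *\<^sub>R y"] by simp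
  also have "\<dots> \<le> norm x + norm y" using \<open>\<bar>t\<bar> \<le> 1\<close> by (simp add: mult_left_le_one_le)
  finally show "norm (x + t *\<^sub>R y) \<le> norm x + norm y" .
qed simp

lemma Gr_int: "integrable M (\<lambda>\<omega>. G x y (r \<omega>))"
proof (rule integrable_const_bound[where B = "\<phi> (norm x + norm y)"])
  show "AE \<omega> in M. norm (G x y (r \<omega>)) \<le> \<phi> (norm x + norm y)"
    using AE_r
  proof eventually_elim
    case (elim \<omega>)
    show ?case using G_nonneg[of x y "r \<omega>"] G_bound[OF elim, of x y] by simp
  qed
qed (rule Gr_meas)

lemma G_minus: "G x y (- t) = G x (- y) t"
  by (simp add: G_def)

lemma sym_int: "(\<integral>\<omega>. G x y (r \<omega>) \<partial>M) = (\<integral>\<omega>. G x (- y) (r \<omega>) \<partial>M)"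
proof -
  have "(\<integral>\<omega>. G x y (r \<omega>) \<partial>M) = integral\<^sup>L (distr M borel r) (G x y)"
    by (rule integral_distr[symmetric, OF r_meas G_borel])
  also have "\<dots> = integral\<^sup>L (distr M borel (\<lambda>\<omega>. - r \<omega>)) (G x y)" by (simp add: symm)
  also have "\<dots> = (\<integral>\<omega>. G x y (- r \<omega>) \<partial>M)"
  proof (rule integral_distr[OF _ G_borel])
    show "(\<lambda>\<omega>. - r \<omega>) \<in> M \<rightarrow>\<^sub>M borel" by measurable
  qed
  finally show ?thesis by (simp add: G_minus)
qed

definition H :: "'a::real_normed_vector \<Rightarrow> 'a \<Rightarrow> real \<Rightarrow> real" where
  "H x y t = (G x y t + G x (- y) t) / 2"

lemma Hr_int: "integrable M (\<lambda>\<omega>. H x y (r \<omega>))"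
proof -
  have "integrable M (\<lambda>\<omega>. G x y (r \<omega>) + G x (- y) (r \<omega>))"
    by (rule Bochner_Integration.integrable_add[OF Gr_int Gr_int])
  then show ?thesis unfolding H_def by (rule integrable_divide)
qed

lemma exp_H: "exp_phi M r \<phi> x y = (\<integral>\<omega>. H x y (r \<omega>) \<partial>M)"
proof -
  have "(\<integral>\<omega>. H x y (r \<omega>) \<partial>M) = ((\<integral>\<omega>. G x y (r \<omega>) \<partial>M) + (\<integral>\<omega>. G x (- y) (r \<omega>) \<partial>M)) / 2"
    unfolding H_def by (simp add: integral_add Gr_int)
  also have "\<dots> = (\<integral>\<omega>. G x y (r \<omega>) \<partial>M)" using sym_int[of x y] by simp
  finally show ?thesis by (simp add: exp_phi_def G_def)
qed

lemma H_eq: "H x y t = (\<phi> (norm (x + t *\<^sub>R y)) + \<phi> (norm (x - t *\<^sub>R y))) / 2"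
  by (simp add: H_def G_def)

lemma H_ge: assumes "norm x = 1" shows "\<phi> 1 \<le> H x y t"
  unfolding H_eq using two_le_sum[OF assms, of "t *\<^sub>R y"] by (intro key0) auto

lemma H_ge2: assumes "norm x = 1" "0 < d" "d \<le> 1"
  "1 + d \<le> max (norm (x + t *\<^sub>R y)) (norm (x - t *\<^sub>R y))"
  shows "\<phi> 1 + F d \<le> H x y t"
  unfolding H_eq using two_le_sum[OF assms(1), of "t *\<^sub>R y"] assms by (intro key) auto

lemma LB:
  fixes x y :: "'a::real_normed_vector"
  assumes x: "norm x = 1" and d: "0 < d" "d \<le> 1" and e: "0 < e" and y: "e \<le> norm y"
    and hyp: "\<And>y'::'a. e/2 \<le> norm y' \<Longrightarrow> 1 + d \<le> max (norm (x + y')) (norm (x - y'))"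
  shows "\<phi> 1 + F d * measure M {\<omega> \<in> space M. 1/2 < \<bar>r \<omega>\<bar>} \<le> exp_phi M r \<phi> x y"
proof -
  define A where "A = {\<omega> \<in> space M. 1/2 < \<bar>r \<omega>\<bar>}"
  have A: "A \<in> sets M" unfolding A_def by measurable
  have pw: "\<phi> 1 + F d * indicator A \<omega> \<le> H x y (r \<omega>)" for \<omega>
  proof (cases "\<omega> \<in> A")
    case True
    then have "1/2 < \<bar>r \<omega>\<bar>" by (simp add: A_def)
    have "e/2 \<le> (1/2) * norm y" using y by simp
    also have "\<dots> \<le> \<bar>r \<omega>\<bar> * norm y"
      using \<open>1/2 < \<bar>r \<omega>\<bar>\<close> by (intro mult_right_mono) auto
    finally have "e/2 \<le> norm (r \<omega> *\<^sub>R y)" by simp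
    then have "1 + d \<le> max (norm (x + r \<omega> *\<^sub>R y)) (norm (x - r \<omega> *\<^sub>R y))"
      by (rule hyp)
    then have "\<phi> 1 + F d \<le> H x y (r \<omega>)" by (rule H_ge2[OF x d])
    moreover have "indicator A \<omega> = (1::real)" using True by simp
    ultimately show ?thesis by simp
  next
    case False
    then have "indicator A \<omega> = (0::real)" by simp
    then show ?thesis using H_ge[OF x, of y "r \<omega>"] by simp
  qed
  have fA: "emeasure M A < \<infinity>" using emeasure_finite[of A] by (simp add: less_top[symmetric])
  have iI: "integrable M (\<lambda>\<omega>. F d * indicator A \<omega>)"
    by (rule integrable_mult_right) (rule integrable_real_indicator[OF A fA])
  have iA: "integrable M (\<lambda>\<omega>. \<phi> 1 + F d * indicator A \<omega>)"
    by (rule Bochner_Integration.integrable_add[OF integrable_const iI])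
  have "(\<integral>\<omega>. \<phi> 1 + F d * indicator A \<omega> \<partial>M) \<le> (\<integral>\<omega>. H x y (r \<omega>) \<partial>M)"
    by (rule integral_mono[OF iA Hr_int]) (rule pw)
  moreover have "(\<integral>\<omega>. \<phi> 1 + F d * indicator A \<omega> \<partial>M) = \<phi> 1 + F d * measure M A"
  proof -
    have "(\<integral>\<omega>. \<phi> 1 + F d * indicator A \<omega> \<partial>M) = (\<integral>\<omega>. \<phi> 1 \<partial>M) + (\<integral>\<omega>. F d * indicator A \<omega> \<partial>M)"
      by (rule Bochner_Integration.integral_add[OF integrable_const iI])
    also have "(\<integral>\<omega>. F d * indicator A \<omega> \<partial>M) = F d * measure M A"
    proof -
      have "A \<inter> space M = A" using A sets.sets_into_space by blast
      then show ?thesis by simp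
    qed
    finally show ?thesis by (simp add: prob_space)
  qed
  ultimately show ?thesis by (simp add: exp_H A_def)
qed

lemma UB:
  fixes x y :: "'a::real_normed_vector"
  assumes "max (norm (x + y)) (norm (x - y)) \<le> c"
  shows "exp_phi M r \<phi> x y \<le> \<phi> c"
proof -
  have "(\<integral>\<omega>. G x y (r \<omega>) \<partial>M) \<le> (\<integral>\<omega>. \<phi> c \<partial>M)"
  proof (rule integral_mono_AE[OF Gr_int])
    show "AE \<omega> in M. G x y (r \<omega>) \<le> \<phi> c"
      using AE_r
    proof eventually_elim
      case (elim \<omega>)
      show ?case unfolding G_def using cc_norm[OF elim, of x y] assms by (intro mono_le) auto
    qed
  qed simp
  then show ?thesis by (simp add: exp_phi_def G_def prob_space)
qed

lemma EQ:
  fixes x y :: "'a::real_normed_vector"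
  assumes x: "norm x = 1" and m: "max (norm (x + y)) (norm (x - y)) = 1"
  shows "exp_phi M r \<phi> x y = \<phi> 1"
proof -
  have "(\<integral>\<omega>. G x y (r \<omega>) \<partial>M) = (\<integral>\<omega>. \<phi> 1 \<partial>M)"
  proof (rule integral_cong_AE[OF Gr_meas])
    show "AE \<omega> in M. G x y (r \<omega>) = \<phi> 1"
      using AE_r
    proof eventually_elim
      case (elim \<omega>)
      have a: "norm (x + r \<omega> *\<^sub>R y) \<le> 1" using cc_norm[OF elim, of x y] m by simp
      have "\<bar>- r \<omega>\<bar> \<le> 1" using elim by simp
      from cc_norm[OF this, of x y] m have b: "norm (x - r \<omega> *\<^sub>R y) \<le> 1" by simp
      have "2 \<le> norm (x + r \<omega> *\<^sub>R y) + norm (x - r \<omega> *\<^sub>R y)" by (rule two_le_sum[OF x])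
      with a b have "norm (x + r \<omega> *\<^sub>R y) = 1" by linarith
      then show ?case by (simp add: G_def)
    qed
  qed simp
  then show ?thesis by (simp add: exp_phi_def G_def prob_space)
qed

lemma AE_pos_exists:
  assumes "AE \<omega> in M. P \<omega>" "0 < measure M {\<omega> \<in> space M. Q \<omega>}"
  shows "\<exists>\<omega>\<in>space M. P \<omega> \<and> Q \<omega>"
proof (rule ccontr)
  assume nt: "\<not> ?thesis"
  from assms(1) obtain N where N: "{\<omega> \<in> space M. \<not> P \<omega>} \<subseteq> N" "emeasure M N = 0" "N \<in> sets M"
    by (rule AE_E)
  have "{\<omega> \<in> space M. Q \<omega>} \<subseteq> N" using N(1) nt by auto
  then have "measure M {\<omega> \<in> space M. Q \<omega>} \<le> measure M N"
    using N(3) by (intro finite_measure_mono) auto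
  also have "\<dots> = 0" using N(2) by (simp add: measure_def)
  finally show False using assms(2) by simp
qed

end


context thm_setup begin

lemma part1:
  fixes x :: "'a::real_normed_vector"
  assumes x: "norm x = 1"
  shows "extreme_point_ball x \<longleftrightarrow> (\<forall>y. exp_phi M r \<phi> x y = \<phi> 1 \<longrightarrow> y = 0)"
proof
  assume ext: "extreme_point_ball x"
  show "\<forall>y. exp_phi M r \<phi> x y = \<phi> 1 \<longrightarrow> y = 0"
  proof (intro allI impI)
    fix y :: 'a assume E: "exp_phi M r \<phi> x y = \<phi> 1"
    have iD: "integrable M (\<lambda>\<omega>. H x y (r \<omega>) - \<phi> 1)"
      by (rule Bochner_Integration.integrable_diff[OF Hr_int integrable_const])
    have "(\<integral>\<omega>. H x y (r \<omega>) - \<phi> 1 \<partial>M) = (\<integral>\<omega>. H x y (r \<omega>) \<partial>M) - (\<integral>\<omega>. \<phi> 1 \<partial>M)"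
      by (rule Bochner_Integration.integral_diff[OF Hr_int integrable_const])
    also have "\<dots> = 0" using E by (simp add: exp_H prob_space)
    finally have "(\<integral>\<omega>. H x y (r \<omega>) - \<phi> 1 \<partial>M) = 0" .
    moreover have "AE \<omega> in M. 0 \<le> H x y (r \<omega>) - \<phi> 1" using H_ge[OF x] by simp
    ultimately have "AE \<omega> in M. H x y (r \<omega>) - \<phi> 1 = 0"
      using integral_nonneg_eq_0_iff_AE[OF iD] by simp
    then obtain \<omega> where \<omega>: "\<omega> \<in> space M" "H x y (r \<omega>) - \<phi> 1 = 0" "1/2 < \<bar>r \<omega>\<bar>"
      using AE_pos_exists[OF _ pos_set] by blast
    define t where "t = r \<omega>"
    have Ht: "H x y t = \<phi> 1" using \<omega> by (simp add: t_def)
    have le: "max (norm (x + t *\<^sub>R y)) (norm (x - t *\<^sub>R y)) \<le> 1"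
    proof (rule ccontr)
      assume "\<not> ?thesis"
      then have gt: "1 < max (norm (x + t *\<^sub>R y)) (norm (x - t *\<^sub>R y))" by (simp only: not_le)
      define d where "d = min (max (norm (x + t *\<^sub>R y)) (norm (x - t *\<^sub>R y)) - 1) 1"
      have d: "0 < d" "d \<le> 1" "1 + d \<le> max (norm (x + t *\<^sub>R y)) (norm (x - t *\<^sub>R y))"
        using gt by (auto simp: d_def)
      have "\<phi> 1 + F d \<le> H x y t" by (rule H_ge2[OF x d])
      with Ht F_pos[OF d(1,2)] show False by simp
    qed
    have "2 \<le> norm (x + t *\<^sub>R y) + norm (x - t *\<^sub>R y)" by (rule two_le_sum[OF x])
    with le have "max (norm (x + t *\<^sub>R y)) (norm (x - t *\<^sub>R y)) = 1" by linarith
    with ext have "t *\<^sub>R y = 0" unfolding extreme_point_ball_def by blast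
    moreover have "t \<noteq> 0" using \<omega> by (auto simp: t_def)
    ultimately show "y = 0" by simp
  qed
next
  assume R: "\<forall>y. exp_phi M r \<phi> x y = \<phi> 1 \<longrightarrow> y = 0"
  show "extreme_point_ball x"
    unfolding extreme_point_ball_def
  proof (intro conjI allI impI)
    show "norm x = 1" by (rule x)
    fix y :: 'a assume "max (norm (x + y)) (norm (x - y)) = 1"
    then have "exp_phi M r \<phi> x y = \<phi> 1" by (rule EQ[OF x])
    with R show "y = 0" by blast
  qed
qed

lemma lower_strong:
  fixes x :: "'a::real_normed_vector"
  assumes x: "norm x = 1" and e: "0 < e"
    and hyp: "\<forall>y. e/2 \<le> norm y \<longrightarrow> 1 + \<delta>0 \<le> max (norm (x + y)) (norm (x - y))"
    and d0: "0 < \<delta>0"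
  shows "\<exists>\<delta>>0. \<forall>y. e \<le> norm y \<longrightarrow> \<phi> 1 + \<delta> \<le> exp_phi M r \<phi> x y"
proof -
  define d where "d = min \<delta>0 1"
  have d: "0 < d" "d \<le> 1" "d \<le> \<delta>0" using d0 by (auto simp: d_def)
  define P where "P = measure M {\<omega> \<in> space M. 1/2 < \<bar>r \<omega>\<bar>}"
  have "0 < F d * P" using F_pos[OF d(1,2)] pos_set by (simp add: P_def)
  moreover have "\<forall>y. e \<le> norm y \<longrightarrow> \<phi> 1 + F d * P \<le> exp_phi M r \<phi> x y"
  proof (intro allI impI)
    fix y :: 'a assume y: "e \<le> norm y"
    show "\<phi> 1 + F d * P \<le> exp_phi M r \<phi> x y"
      unfolding P_def
    proof (rule LB[OF x d(1,2) e y])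
      fix y' :: 'a assume "e/2 \<le> norm y'"
      then have "1 + \<delta>0 \<le> max (norm (x + y')) (norm (x - y'))" using hyp by blast
      then show "1 + d \<le> max (norm (x + y')) (norm (x - y'))" using d(3) by linarith
    qed
  qed
  ultimately show ?thesis by blast
qed

lemma upper_strong:
  fixes x y :: "'a::real_normed_vector"
  assumes E: "\<phi> 1 + c \<le> exp_phi M r \<phi> x y" and \<eta>: "\<phi> (1 + \<eta>) < \<phi> 1 + c"
  shows "1 + \<eta> \<le> max (norm (x + y)) (norm (x - y))"
proof (rule ccontr)
  assume "\<not> ?thesis"
  then have "max (norm (x + y)) (norm (x - y)) < 1 + \<eta>" by (simp only: not_le)
  then have "max (norm (x + y)) (norm (x - y)) \<le> 1 + \<eta>" by (rule less_imp_le)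
  then have "exp_phi M r \<phi> x y \<le> \<phi> (1 + \<eta>)" by (rule UB)
  with E \<eta> show False by simp
qed

lemma part2:
  fixes x :: "'a::real_normed_vector"
  assumes x: "norm x = 1"
  shows "strongly_extreme_point_ball x \<longleftrightarrow>
     (\<forall>\<epsilon>>0. \<exists>\<delta>>0. \<forall>y. norm y \<ge> \<epsilon> \<longrightarrow> exp_phi M r \<phi> x y \<ge> \<phi> 1 + \<delta>)"
proof
  assume S: "strongly_extreme_point_ball x"
  show "\<forall>\<epsilon>>0. \<exists>\<delta>>0. \<forall>y. norm y \<ge> \<epsilon> \<longrightarrow> exp_phi M r \<phi> x y \<ge> \<phi> 1 + \<delta>"
  proof (intro allI impI)
    fix \<epsilon> :: real assume e: "0 < \<epsilon>"
    then have "0 < \<epsilon>/2" by simp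
    with S obtain \<delta>0 where "0 < \<delta>0" "\<forall>y. \<epsilon>/2 \<le> norm y \<longrightarrow> 1 + \<delta>0 \<le> max (norm (x + y)) (norm (x - y))"
      unfolding strongly_extreme_point_ball_def by blast
    from lower_strong[OF x e this(2) this(1)]
    show "\<exists>\<delta>>0. \<forall>y. norm y \<ge> \<epsilon> \<longrightarrow> exp_phi M r \<phi> x y \<ge> \<phi> 1 + \<delta>" by blast
  qed
next
  assume R: "\<forall>\<epsilon>>0. \<exists>\<delta>>0. \<forall>y. norm y \<ge> \<epsilon> \<longrightarrow> exp_phi M r \<phi> x y \<ge> \<phi> 1 + \<delta>"
  show "strongly_extreme_point_ball x"
    unfolding strongly_extreme_point_ball_def
  proof (intro conjI allI impI)
    show "norm x = 1" by (rule x)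
    fix \<epsilon> :: real assume "0 < \<epsilon>"
    with R obtain c where c: "0 < c" "\<forall>y. norm y \<ge> \<epsilon> \<longrightarrow> exp_phi M r \<phi> x y \<ge> \<phi> 1 + c" by blast
    obtain \<eta> where \<eta>: "0 < \<eta>" "\<phi> (1 + \<eta>) < \<phi> 1 + c" using right_cont[OF c(1)] by blast
    show "\<exists>\<delta>>0. \<forall>y. \<epsilon> \<le> norm y \<longrightarrow> 1 + \<delta> \<le> max (norm (x + y)) (norm (x - y))"
      using c(2) \<eta> upper_strong by blast
  qed
qed

lemma part3:
  "uniformly_convex TYPE('a::real_normed_vector) \<longleftrightarrow> (\<forall>\<epsilon>>0. delta_phi M r \<phi> TYPE('a) \<epsilon> > 0)"
proof
  assume U: "uniformly_convex TYPE('a)"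
  show "\<forall>\<epsilon>>0. delta_phi M r \<phi> TYPE('a) \<epsilon> > 0"
  proof (intro allI impI)
    fix \<epsilon> :: real assume e: "0 < \<epsilon>"
    then have "0 < \<epsilon>/2" by simp
    with U obtain \<delta>0 where d0: "0 < \<delta>0"
      and h: "\<forall>x y::'a. norm x = 1 \<and> \<epsilon>/2 \<le> norm y \<longrightarrow> 1 + \<delta>0 \<le> max (norm (x + y)) (norm (x - y))"
      unfolding uniformly_convex_def by blast
    define d where "d = min \<delta>0 1"
    have d: "0 < d" "d \<le> 1" "d \<le> \<delta>0" using d0 by (auto simp: d_def)
    define P where "P = measure M {\<omega> \<in> space M. 1/2 < \<bar>r \<omega>\<bar>}"
    have cpos: "0 < F d * P" using F_pos[OF d(1,2)] pos_set by (simp add: P_def)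
    have "ereal (F d * P) \<le> delta_phi M r \<phi> TYPE('a) \<epsilon>"
      unfolding delta_phi_def
    proof (rule INF_greatest)
      fix p assume "p \<in> {(x::'a, y::'a). norm x = 1 \<and> norm y \<ge> \<epsilon>}"
      then obtain x y :: 'a where p: "p = (x, y)" "norm x = 1" "\<epsilon> \<le> norm y" by auto
      have "\<phi> 1 + F d * P \<le> exp_phi M r \<phi> x y"
        unfolding P_def
      proof (rule LB[OF p(2) d(1,2) e p(3)])
        fix y' :: 'a assume "\<epsilon>/2 \<le> norm y'"
        then have "1 + \<delta>0 \<le> max (norm (x + y')) (norm (x - y'))" using h p(2) by blast
        then show "1 + d \<le> max (norm (x + y')) (norm (x - y'))" using d(3) by linarith
      qed
      then show "ereal (F d * P) \<le> ereal (exp_phi M r \<phi> (fst p) (snd p) - \<phi> 1)"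
        using p by simp
    qed
    then show "0 < delta_phi M r \<phi> TYPE('a) \<epsilon>"
      using cpos by (meson ereal_less(2) less_le_trans)
  qed
next
  assume D: "\<forall>\<epsilon>>0. delta_phi M r \<phi> TYPE('a) \<epsilon> > 0"
  show "uniformly_convex TYPE('a)"
    unfolding uniformly_convex_def
  proof (intro allI impI)
    fix \<epsilon> :: real assume "0 < \<epsilon>"
    with D have "0 < delta_phi M r \<phi> TYPE('a) \<epsilon>" by blast
    then obtain c where c: "0 < ereal c" "ereal c < delta_phi M r \<phi> TYPE('a) \<epsilon>"
      using ereal_dense2 by blast
    have c0: "0 < c" using c(1) by simp
    obtain \<eta> where \<eta>: "0 < \<eta>" "\<phi> (1 + \<eta>) < \<phi> 1 + c" using right_cont[OF c0] by blast
    have "1 + \<eta> \<le> max (norm (x + y)) (norm (x - y))"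
      if xy: "norm x = 1 \<and> \<epsilon> \<le> norm y" for x y :: 'a
    proof (rule upper_strong[OF _ \<eta>(2)])
      have "delta_phi M r \<phi> TYPE('a) \<epsilon> \<le> ereal (exp_phi M r \<phi> x y - \<phi> 1)"
        unfolding delta_phi_def using xy by (intro INF_lower2[of "(x, y)"]) auto
      with c(2) have "ereal c < ereal (exp_phi M r \<phi> x y - \<phi> 1)" by (rule less_le_trans)
      then show "\<phi> 1 + c \<le> exp_phi M r \<phi> x y" by simp
    qed
    with \<eta>(1) show "\<exists>\<delta>>0. \<forall>x y::'a. norm x = 1 \<and> \<epsilon> \<le> norm y \<longrightarrow> 1 + \<delta> \<le> max (norm (x + y)) (norm (x - y))"
      by blast
  qed
qed

end

theorem theorem3p1:
  fixes M :: "'b measure" and r :: "'b \<Rightarrow> real" and \<phi> :: "real \<Rightarrow> real"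
  assumes "prob_space M"
    and "r \<in> borel_measurable M"
    and "distr M borel r = distr M borel (\<lambda>\<omega>. - r \<omega>)"
    and "esssup M (\<lambda>\<omega>. ereal \<bar>r \<omega>\<bar>) = 1"
    and "strictly_convex_nonneg \<phi>"
    and "mono_on {0..} \<phi>"
    and "\<phi> 0 = 0"
  shows "(\<forall>x::'a::banach. norm x = 1 \<longrightarrow>
            (extreme_point_ball x \<longleftrightarrow> (\<forall>y. exp_phi M r \<phi> x y = \<phi> 1 \<longrightarrow> y = 0)))
       \<and> (\<forall>x::'a. norm x = 1 \<longrightarrow>
            (strongly_extreme_point_ball x \<longleftrightarrow>
              (\<forall>\<epsilon>>0. \<exists>\<delta>>0. \<forall>y. norm y \<ge> \<epsilon> \<longrightarrow> exp_phi M r \<phi> x y \<ge> \<phi> 1 + \<delta>)))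
       \<and> (uniformly_convex TYPE('a) \<longleftrightarrow> (\<forall>\<epsilon>>0. delta_phi M r \<phi> TYPE('a) \<epsilon> > 0))"
proof -
  interpret thm_setup \<phi> M r
    using assms by (intro thm_setup.intro phi_setup.intro thm_setup_axioms.intro) auto
  show ?thesis using part1 part2 part3 by blast
qed


end
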